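(* Let $\Gamma$ be a signed bipartite graph on $n$ vertices with adjacency matrix $\begin{bmatrix} O & M\\ M^{\mathrm T} & O\end{bmatrix}$, where $M$ is a square matrix of order $m=n/2$. Then $\Delta(\Gamma)=2^n\det^2(M)\,\Delta^2(M^{\mathrm T}M)$.
   Context: A signed graph is a simple graph with each edge assigned a sign $\pm1$; its adjacency matrix has entry equal to the edge sign for adjacent vertices and $0$ otherwise. For a monic polynomial $f$ of degree $k$ with roots $\alpha_1,\dots,\alpha_k$ (with multiplicity), the discriminant is $\Delta(f)=\prod_{1\le i<j\le k}(\alpha_i-\alpha_j)^2$. For a square matrix $B$, $\Delta(B)$ is the discriminant of $\det(xI-B)$, and $\Delta(\Gamma)$ is the discriminant of the adjacency matrix of $\Gamma$. *)

theory Defs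
  imports "Jordan_Normal_Form.Char_Poly" "HOL-Computational_Algebra.Fundamental_Theorem_Algebra"
begin

definition poly_roots_list :: "complex poly \<Rightarrow> complex list" where
  "poly_roots_list p = (SOME rs. length rs = degree p \<and>
      p = Polynomial.smult (lead_coeff p) (\<Prod>a\<leftarrow>rs. [:-a, 1:]))"

text \<open>Discriminant of a (monic) polynomial: product over i<j of (alpha_i - alpha_j)^2.\<close>
definition poly_disc :: "complex poly \<Rightarrow> complex" where
  "poly_disc p = (let rs = poly_roots_list p in
      \<Prod>(i,j)\<in>{(i,j). i < j \<and> j < length rs}. (rs ! i - rs ! j)^2)"

definition mat_disc :: "int mat \<Rightarrow> complex" where
  "mat_disc B = poly_disc (map_poly of_int (char_poly B))"

definition signed_adj :: "nat \<Rightarrow> int mat \<Rightarrow> bool" where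
  "signed_adj n A \<longleftrightarrow> A \<in> carrier_mat n n \<and>
     (\<forall>i<n. \<forall>j<n. A $$ (i,j) \<in> {-1,0,1} \<and> A $$ (i,j) = A $$ (j,i)) \<and>
     (\<forall>i<n. A $$ (i,i) = 0)"

end

theory Submission
  imports Defs
begin

fun Dl :: "complex list \<Rightarrow> complex" where
  "Dl [] = 1"
| "Dl (a # rs) = (\<Prod>r\<leftarrow>rs. (a - r)^2) * Dl rs"

lemma pairs_Sigma: "{(i,j). i < j \<and> j < (k::nat)} = Sigma {..<k} (\<lambda>i. {Suc i..<k})"
  by auto

lemma Dl_pairs: "(\<Prod>(i,j)\<in>{(i,j). i < j \<and> j < length rs}. (rs ! i - rs ! j)^2) = Dl rs"
proof (induction rs)
  case Nil
  then show ?case by simp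
next
  case (Cons a rs)
  let ?k = "length rs"
  let ?f = "\<lambda>i. \<Prod>j\<in>{Suc i..<Suc ?k}. ((a#rs) ! i - (a#rs) ! j)^2"
  have "(\<Prod>(i,j)\<in>{(i,j). i < j \<and> j < length (a#rs)}. ((a#rs) ! i - (a#rs) ! j)^2)
      = (\<Prod>i<Suc ?k. ?f i)"
    unfolding pairs_Sigma by (subst prod.Sigma) auto
  also have "\<dots> = ?f 0 * (\<Prod>i<?k. ?f (Suc i))"
    by (rule prod.lessThan_Suc_shift)
  also have "?f 0 = (\<Prod>r\<leftarrow>rs. (a - r)^2)"
  proof -
    have "?f 0 = (\<Prod>j\<in>Suc ` {0..<?k}. ((a#rs) ! 0 - (a#rs) ! j)^2)"
      by (simp only: image_Suc_atLeastLessThan)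
    also have "\<dots> = (\<Prod>j\<in>{0..<?k}. (a - rs ! j)^2)"
      by (subst prod.reindex) auto
    also have "\<dots> = (\<Prod>r\<leftarrow>rs. (a - r)^2)"
      by (subst prod.list_conv_set_nth) simp
    finally show ?thesis .
  qed
  also have "(\<Prod>i<?k. ?f (Suc i)) = (\<Prod>i<?k. \<Prod>j\<in>{Suc i..<?k}. (rs ! i - rs ! j)^2)"
  proof (rule prod.cong[OF refl])
    fix i assume "i \<in> {..<?k}"
    have "?f (Suc i) = (\<Prod>j\<in>Suc ` {Suc i..<?k}. ((a#rs) ! Suc i - (a#rs) ! j)^2)"
      by (simp only: image_Suc_atLeastLessThan)
    also have "\<dots> = (\<Prod>j\<in>{Suc i..<?k}. (rs ! i - rs ! j)^2)"
      by (subst prod.reindex) auto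
    finally show "?f (Suc i) = (\<Prod>j\<in>{Suc i..<?k}. (rs ! i - rs ! j)^2)" .
  qed
  also have "\<dots> = Dl rs"
    using Cons.IH unfolding pairs_Sigma by (subst prod.Sigma) auto
  finally show ?case by simp
qed
lemma Dl_middle: "Dl (us @ a # vs) = (\<Prod>r\<leftarrow>us @ vs. (a - r)^2) * Dl (us @ vs)"
proof (induction us)
  case Nil
  then show ?case by simp
next
  case (Cons b us)
  have "Dl ((b # us) @ a # vs) = (\<Prod>r\<leftarrow>us @ a # vs. (b - r)^2) * Dl (us @ a # vs)" by simp
  also have "\<dots> = (b - a)^2 * (\<Prod>r\<leftarrow>us @ vs. (b - r)^2) * ((\<Prod>r\<leftarrow>us @ vs. (a - r)^2) * Dl (us @ vs))"
    using Cons.IH by simp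
  also have "\<dots> = (\<Prod>r\<leftarrow>(b # us) @ vs. (a - r)^2) * Dl ((b # us) @ vs)"
    by (simp add: power2_commute[of a b] algebra_simps)
  finally show ?case .
qed

lemma Dl_perm: "mset rs = mset ts \<Longrightarrow> Dl rs = Dl ts"
proof (induction rs arbitrary: ts)
  case Nil
  then show ?case by simp
next
  case (Cons a rs)
  then have "a \<in> set ts" by (metis list.set_intros(1) set_mset_mset)
  then obtain us vs where ts: "ts = us @ a # vs" by (meson split_list)
  with Cons.prems have m: "mset rs = mset (us @ vs)" by simp
  have "(\<Prod>r\<leftarrow>rs. (a - r)^2) = (\<Prod>r\<leftarrow>us @ vs. (a - r)^2)"
    by (metis m mset_map prod_mset_prod_list)
  then show ?case using Cons.IH[OF m] ts Dl_middle by simp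
qed

lemma linprod_eq_mset:
  "(\<Prod>a\<leftarrow>rs. [:-a, 1:]) = (\<Prod>a\<leftarrow>ts. [:-(a::complex), 1:]) \<Longrightarrow> mset rs = mset ts"
proof (induction rs arbitrary: ts)
  case Nil
  then have "degree (\<Prod>a\<leftarrow>ts. [:-(a::complex), 1:]) = 0" by simp
  then have "length ts = 0" by (simp add: degree_linear_factors)
  then show ?case by simp
next
  case (Cons a rs)
  have "poly (\<Prod>a\<leftarrow>ts. [:-(a::complex), 1:]) a = 0"
    using Cons.prems[symmetric] by simp
  then have "a \<in> set ts" by (simp add: poly_prod_list prod_list_zero_iff image_iff)
  then obtain us vs where ts: "ts = us @ a # vs" by (meson split_list)
  have "(\<Prod>a\<leftarrow>ts. [:-(a::complex), 1:]) = [:-a, 1:] * (\<Prod>a\<leftarrow>us @ vs. [:-a, 1:])"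
    unfolding ts by (simp only: map_append list.map prod_list.append prod_list.Cons mult.left_commute)
  with Cons.prems have "[:-a, 1:] * (\<Prod>a\<leftarrow>rs. [:-a, 1:]) = [:-a, 1:] * (\<Prod>a\<leftarrow>us @ vs. [:-(a::complex), 1:])"
    by (simp only: list.map prod_list.Cons)
  then have "(\<Prod>a\<leftarrow>rs. [:-a, 1:]) = (\<Prod>a\<leftarrow>us @ vs. [:-(a::complex), 1:])"
    by (metis mult_left_cancel pCons_eq_0_iff one_neq_zero)
  from Cons.IH[OF this] ts show ?case by simp
qed

lemma poly_disc_eq:
  assumes "length ts = degree p" "p = Polynomial.smult (lead_coeff p) (\<Prod>a\<leftarrow>ts. [:-a, 1:])"
  shows "poly_disc p = Dl ts"
proof -
  let ?P = "\<lambda>rs. length rs = degree p \<and> p = Polynomial.smult (lead_coeff p) (\<Prod>a\<leftarrow>rs. [:-a, 1:])"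
  have "?P (poly_roots_list p)" unfolding poly_roots_list_def
    by (rule someI[of ?P ts]) (use assms in auto)
  then have rs: "length (poly_roots_list p) = degree p"
    "p = Polynomial.smult (lead_coeff p) (\<Prod>a\<leftarrow>poly_roots_list p. [:-a, 1:])" by auto
  have "Dl (poly_roots_list p) = Dl ts"
  proof (cases "p = 0")
    case True
    then show ?thesis using rs assms by simp
  next
    case False
    then have "lead_coeff p \<noteq> 0" by simp
    then have "(\<Prod>a\<leftarrow>poly_roots_list p. [:-a, 1:]) = (\<Prod>a\<leftarrow>ts. [:-a, 1:])"
      using rs(2) assms(2) by (metis smult_cancel)
    then show ?thesis by (intro Dl_perm linprod_eq_mset)
  qed
  then show ?thesis unfolding poly_disc_def Let_def Dl_pairs .
qed
definition sq_roots :: "complex list \<Rightarrow> complex list" where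
  "sq_roots rs = concat (map (\<lambda>\<mu>. [csqrt \<mu>, - csqrt \<mu>]) rs)"

lemma sq_roots_simps [simp]: "sq_roots [] = []"
  "sq_roots (\<mu> # rs) = csqrt \<mu> # - csqrt \<mu> # sq_roots rs"
  by (simp_all add: sq_roots_def)

lemma length_sq_roots [simp]: "length (sq_roots rs) = 2 * length rs"
  by (induction rs) auto

lemma prod_sq_roots: "(\<Prod>r\<leftarrow>sq_roots rs. (t - r)^2) = (\<Prod>\<nu>\<leftarrow>rs. (t^2 - \<nu>)^2)"
proof (induction rs)
  case Nil
  then show ?case by simp
next
  case (Cons \<nu> rs)
  have "(t - csqrt \<nu>)^2 * (t - - csqrt \<nu>)^2 = (t^2 - (csqrt \<nu>)^2)^2"
    by (simp add: power2_eq_square algebra_simps)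
  also have "(csqrt \<nu>)^2 = \<nu>" by simp
  finally have "(t - csqrt \<nu>)^2 * (t - - csqrt \<nu>)^2 = (t^2 - \<nu>)^2" .
  then show ?case using Cons.IH by (simp add: mult.assoc)
qed

lemma Dl_sq_roots: "Dl (sq_roots rs) = 4 ^ length rs * prod_list rs * (Dl rs)^2"
proof (induction rs)
  case Nil
  then show ?case by simp
next
  case (Cons \<mu> rs)
  let ?s = "csqrt \<mu>"
  let ?P = "\<Prod>\<nu>\<leftarrow>rs. (\<mu> - \<nu>)^2"
  have s2: "?s^2 = \<mu>" by simp
  have "Dl (sq_roots (\<mu> # rs)) = (?s - - ?s)^2 * (\<Prod>r\<leftarrow>sq_roots rs. (?s - r)^2)
      * ((\<Prod>r\<leftarrow>sq_roots rs. (- ?s - r)^2) * Dl (sq_roots rs))"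
    by simp
  also have "(\<Prod>r\<leftarrow>sq_roots rs. (?s - r)^2) = ?P"
    using prod_sq_roots[of ?s rs] s2 by simp
  also have "(\<Prod>r\<leftarrow>sq_roots rs. (- ?s - r)^2) = ?P"
    using prod_sq_roots[of "- ?s" rs] s2 by simp
  also have "(?s - - ?s)^2 = 4 * \<mu>"
    using s2 by (simp add: power2_eq_square algebra_simps)
  finally show ?case using Cons.IH by (simp add: power2_eq_square algebra_simps)
qed
lemma det_block_scalar:
  fixes x :: "'a :: idom" and B C :: "'a mat"
  assumes B: "B \<in> carrier_mat m m" and C: "C \<in> carrier_mat m m" and x: "x \<noteq> 0"
  shows "det (four_block_mat (x \<cdot>\<^sub>m 1\<^sub>m m) B C (x \<cdot>\<^sub>m 1\<^sub>m m)) = det ((x * x) \<cdot>\<^sub>m 1\<^sub>m m - C * B)"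
proof -
  let ?A = "x \<cdot>\<^sub>m 1\<^sub>m m"
  let ?Big = "four_block_mat ?A B C ?A"
  let ?P = "four_block_mat (1\<^sub>m m) (0\<^sub>m m m) (- C) ?A"
  have A: "?A \<in> carrier_mat m m" by simp
  have CA: "C * ?A = x \<cdot>\<^sub>m C" by (subst mult_smult_distrib[OF C, of _ m]) (use C in auto)
  have AC: "?A * C = x \<cdot>\<^sub>m C" by (subst mult_smult_assoc_mat[OF _ C, of _ m]) (use C in auto)
  have AA: "?A * ?A = (x * x) \<cdot>\<^sub>m 1\<^sub>m m" by (rule eq_matI) auto
  have "?P * ?Big = four_block_mat (1\<^sub>m m * ?A + 0\<^sub>m m m * C) (1\<^sub>m m * B + 0\<^sub>m m m * ?A)
      (- C * ?A + ?A * C) (- C * B + ?A * ?A)"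
    by (rule mult_four_block_mat) (use B C in auto)
  also have "1\<^sub>m m * ?A + 0\<^sub>m m m * C = ?A" using C by (intro eq_matI) auto
  also have "1\<^sub>m m * B + 0\<^sub>m m m * ?A = B" using B by (intro eq_matI) auto
  also have "- C * ?A + ?A * C = 0\<^sub>m m m" unfolding uminus_mult_left_mat CA AC
    using C by (intro eq_matI) auto
  also have "- C * B + ?A * ?A = (x * x) \<cdot>\<^sub>m 1\<^sub>m m - C * B" unfolding AA
    using C B by (intro eq_matI) auto
  finally have prod: "?P * ?Big = four_block_mat ?A B (0\<^sub>m m m) ((x * x) \<cdot>\<^sub>m 1\<^sub>m m - C * B)" .
  have "det ?P * det ?Big = det (?P * ?Big)"
    by (rule det_mult[symmetric, of _ "m + m"]) (use B C in auto)
  also have "\<dots> = det ?A * det ((x * x) \<cdot>\<^sub>m 1\<^sub>m m - C * B)"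
    unfolding prod by (rule det_four_block_mat_lower_left_zero) (use B C in auto)
  also have "det ?P = det (1\<^sub>m m) * det ?A"
    by (rule det_four_block_mat_upper_right_zero) (use C in auto)
  finally have "det ?A * det ?Big = det ?A * det ((x * x) \<cdot>\<^sub>m 1\<^sub>m m - C * B)" by simp
  moreover have "det ?A \<noteq> 0" using x by simp
  ultimately show ?thesis using x by auto
qed
lemma pcompose_hom: "comm_ring_hom (\<lambda>p. pcompose p (q :: 'a :: comm_ring_1 poly))"
  by unfold_locales (simp_all add: pcompose_add pcompose_mult pcompose_1)

lemma const_hom: "comm_ring_hom (\<lambda>a :: 'a :: comm_ring_1. [:a:])"
  by unfold_locales (simp_all add: one_pCons)

lemma char_poly_block:
  fixes N :: "complex mat"
  assumes N: "N \<in> carrier_mat m m"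
  shows "char_poly (four_block_mat (0\<^sub>m m m) N (transpose_mat N) (0\<^sub>m m m))
    = pcompose (char_poly (transpose_mat N * N)) [:0,0,1:]"
proof -
  interpret K: comm_ring_hom "\<lambda>a :: complex. [:a:]" by (rule const_hom)
  interpret h: comm_ring_hom "\<lambda>p :: complex poly. pcompose p [:0,0,1:]" by (rule pcompose_hom)
  let ?X = "[:0,1:] :: complex poly"
  let ?cm = "map_mat (\<lambda>a. [:-a:])"
  let ?B = "transpose_mat N * N"
  have B: "?B \<in> carrier_mat m m" using N by simp
  have NT: "transpose_mat N \<in> carrier_mat m m" using N by simp
  have "char_poly_matrix (four_block_mat (0\<^sub>m m m) N (transpose_mat N) (0\<^sub>m m m))
     = four_block_mat (?X \<cdot>\<^sub>m 1\<^sub>m m) (?cm N) (?cm (transpose_mat N)) (?X \<cdot>\<^sub>m 1\<^sub>m m)"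
    unfolding char_poly_matrix_def using N by (intro eq_matI) auto
  then have "char_poly (four_block_mat (0\<^sub>m m m) N (transpose_mat N) (0\<^sub>m m m))
     = det ((?X * ?X) \<cdot>\<^sub>m 1\<^sub>m m - ?cm (transpose_mat N) * ?cm N)"
    unfolding char_poly_def using N by (simp add: det_block_scalar)
  also have "?cm (transpose_mat N) * ?cm N = map_mat (\<lambda>a. [:a:]) (transpose_mat N) * map_mat (\<lambda>a. [:a:]) N"
  proof -
    have "?cm (transpose_mat N) = - map_mat (\<lambda>a. [:a:]) (transpose_mat N)" using N by (intro eq_matI) auto
    moreover have "?cm N = - map_mat (\<lambda>a. [:a:]) N" using N by (intro eq_matI) auto
    ultimately show ?thesis by simp
  qed
  also have "\<dots> = map_mat (\<lambda>a. [:a:]) ?B" using N by (simp add: K.mat_hom_mult[OF NT N])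
  also have "(?X * ?X) \<cdot>\<^sub>m 1\<^sub>m m - map_mat (\<lambda>a. [:a:]) ?B = map_mat (\<lambda>p. pcompose p [:0,0,1:]) (char_poly_matrix ?B)"
    unfolding char_poly_matrix_def using B
    by (intro eq_matI) (auto simp: pcompose_add pcompose_pCons)
  also have "det \<dots> = pcompose (char_poly ?B) [:0,0,1:]"
    unfolding char_poly_def by (rule comm_ring_hom.hom_det[OF pcompose_hom])
  finally show ?thesis .
qed
lemma pcompose_linprod:
  "pcompose (\<Prod>\<mu>\<leftarrow>rs. [:-\<mu>, 1:]) [:0,0,1:] = (\<Prod>t\<leftarrow>sq_roots rs. [:-t, 1:])"
proof (induction rs)
  case Nil
  then show ?case by (simp add: pcompose_1)
next
  case (Cons \<mu> rs)
  have s: "csqrt \<mu> * csqrt \<mu> = \<mu>" by (metis power2_csqrt power2_eq_square)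
  have e: "pcompose [:-\<mu>, 1:] [:0,0,1:] = [:-csqrt \<mu>, 1:] * [:- (- csqrt \<mu>), 1:]"
    by (simp add: pcompose_pCons s)
  show ?case
    by (simp only: list.map prod_list.Cons sq_roots_simps pcompose_mult e Cons.IH mult.assoc)
qed

lemma prod_roots_det:
  fixes B :: "complex mat"
  assumes B: "B \<in> carrier_mat m m" and g: "char_poly B = (\<Prod>\<mu>\<leftarrow>rs. [:-\<mu>, 1:])"
    and len: "length rs = m"
  shows "prod_list rs = det B"
proof -
  have "poly (char_poly B) 0 = det (- char_matrix B 0)" by (rule char_poly_matrix[OF B])
  also have "char_matrix B 0 = B" unfolding char_matrix_def using B by (intro eq_matI) auto
  also have "- B = (-1) \<cdot>\<^sub>m B" using B by (intro eq_matI) auto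
  also have "det \<dots> = (-1)^m * det B" using B by simp
  finally have 1: "poly (char_poly B) 0 = (-1)^m * det B" .
  have "poly (\<Prod>\<mu>\<leftarrow>rs. [:-\<mu>, 1:]) 0 = (\<Prod>\<mu>\<leftarrow>rs. - \<mu>)"
    by (simp add: poly_prod_list o_def)
  also have "\<dots> = (-1)^length rs * prod_list rs"
    by (induction rs) auto
  finally have 2: "poly (char_poly B) 0 = (-1)^m * prod_list rs" using g len by simp
  from 1 2 show ?thesis by simp
qed
theorem lemma4p2:
  fixes M :: "int mat" and m n :: nat
  assumes "M \<in> carrier_mat m m"
    and "n = 2 * m"
    and "signed_adj n (four_block_mat (0\<^sub>m m m) M (transpose_mat M) (0\<^sub>m m m))"
  shows "mat_disc (four_block_mat (0\<^sub>m m m) M (transpose_mat M) (0\<^sub>m m m))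
         = of_int (2 ^ n * (det M)^2) * (mat_disc (transpose_mat M * M))^2"
proof -
  have M: "M \<in> carrier_mat m m" by fact
  let ?Ab = "four_block_mat (0\<^sub>m m m) M (transpose_mat M) (0\<^sub>m m m)"
  define N :: "complex mat" where "N = map_mat of_int M"
  have N: "N \<in> carrier_mat m m" unfolding N_def using M by simp
  have NT: "transpose_mat N \<in> carrier_mat m m" using N by simp
  have Ab: "?Ab \<in> carrier_mat (m + m) (m + m)" using M by simp
  have mapAb: "map_mat of_int ?Ab = four_block_mat (0\<^sub>m m m) N (transpose_mat N) (0\<^sub>m m m)"
    unfolding N_def using M by (intro eq_matI) auto
  have mapB: "map_mat of_int (transpose_mat M * M) = transpose_mat N * N"
    unfolding N_def using M
    by (simp add: of_int_hom.mat_hom_mult[of _ m m _ m] map_mat_transpose)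
  have d1: "mat_disc ?Ab = poly_disc (char_poly (four_block_mat (0\<^sub>m m m) N (transpose_mat N) (0\<^sub>m m m)))"
    unfolding mat_disc_def of_int_hom.char_poly_hom[OF Ab, symmetric] mapAb ..
  have d2: "mat_disc (transpose_mat M * M) = poly_disc (char_poly (transpose_mat N * N))"
  proof -
    have "of_int_poly (char_poly (transpose_mat M * M)) = char_poly (map_mat of_int (transpose_mat M * M))"
      by (rule of_int_hom.char_poly_hom[symmetric, of _ m]) (use M in simp)
    then show ?thesis unfolding mat_disc_def using mapB by metis
  qed
  let ?B = "transpose_mat N * N"
  have B: "?B \<in> carrier_mat m m" using N by simp
  obtain rs where g: "char_poly ?B = (\<Prod>\<mu>\<leftarrow>rs. [:-\<mu>, 1:])" and len: "length rs = m"
    using char_poly_factorized[OF B] by blast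
  have degB: "degree (char_poly ?B) = m" "lead_coeff (char_poly ?B) = 1"
    using degree_monic_char_poly[OF B] by auto
  have disc_g: "poly_disc (char_poly ?B) = Dl rs"
    by (rule poly_disc_eq) (use g len degB in auto)
  let ?Ac = "four_block_mat (0\<^sub>m m m) N (transpose_mat N) (0\<^sub>m m m)"
  have Ac: "?Ac \<in> carrier_mat (m + m) (m + m)" using N by simp
  have f: "char_poly ?Ac = (\<Prod>t\<leftarrow>sq_roots rs. [:-t, 1:])"
    unfolding char_poly_block[OF N] g pcompose_linprod ..
  have degA: "degree (char_poly ?Ac) = m + m" "lead_coeff (char_poly ?Ac) = 1"
    using degree_monic_char_poly[OF Ac] by auto
  have disc_f: "poly_disc (char_poly ?Ac) = Dl (sq_roots rs)"
    by (rule poly_disc_eq) (use f len degA in auto)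
  have pr: "prod_list rs = det ?B" by (rule prod_roots_det[OF B g len])
  have "det ?B = det N * det N"
    using det_mult[OF NT N] det_transpose[OF N] by simp
  also have "det N = of_int (det M)" unfolding N_def by simp
  finally have pr2: "prod_list rs = of_int ((det M)^2)" using pr by (simp add: power2_eq_square)
  have "mat_disc ?Ab = 4 ^ m * prod_list rs * (Dl rs)^2"
    using d1 disc_f Dl_sq_roots len by simp
  also have "\<dots> = of_int (2 ^ n * (det M)^2) * (mat_disc (transpose_mat M * M))^2"
    using d2 disc_g pr2 assms(2) by (simp add: power_mult)
  finally show ?thesis .
qed

end
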